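(* Let $t_0>0$ and let $f:\{-1,0,1\}\times[t_0,\infty)\to[0,\infty)$ be such that $f(j,t)$ is Lebesgue measurable in $t$ for each $j$. If there are $D\ge0$ and $\alpha\in\mathbb{R}$ such that, for all $j\in\{0,1\}$ and all $t_2\ge t_1\ge t_0$, $$f(j,t_2)+\int_{t_1}^{t_2}f(j-1,t)\,dt\lesssim f(j,t_1)+t_1^{\alpha+j}D,$$ then for all $t\ge2t_0$, $$f(0,t)\lesssim_\alpha t^{-1}f(1,t/2)+t^{\alpha}D.$$
   Context: $A\lesssim B$ means $A\le CB$ for a constant $C$ independent of $t,t_1,t_2$ and $D$; $\lesssim_\alpha$ means the constant may also depend on $\alpha$. *)

theory Defs
  imports "HOL-Analysis.Analysis"
begin

end

theory Submission
  imports Defs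
begin

lemma const_int:
  assumes "a \<le> b"
  shows "(\<integral>\<^sup>+ t\<in>{a..b}. ennreal c \<partial>lebesgue) = ennreal c * ennreal (b - a)"
proof -
  have e: "(\<integral>\<^sup>+ t. ennreal c * indicator {a..b} t \<partial>lebesgue) = ennreal c * emeasure lebesgue {a..b}"
    by (rule nn_integral_cmult_indicator) simp
  show ?thesis using e assms by (simp add: mult.commute)
qed

lemma fin_ineq:
  fixes A P Q c1 c2 c3 :: real
  assumes "A \<le> c1*Q + c2*P + c3*Q" "0 \<le> c1*P" "0 \<le> c2*Q" "0 \<le> c3*P"
  shows "A \<le> (c1+c2+c3)*(P+Q)"
proof -
  have "(c1+c2+c3)*(P+Q) = (c1*Q + c2*P + c3*Q) + c1*P + c2*Q + c3*P"
    by (simp add: algebra_simps)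
  then show ?thesis using assms by linarith
qed

theorem lemma5p1:
  fixes \<alpha> C :: real
  assumes "C > 0"
  shows "\<exists>C'. \<forall>(t0::real) (f::int \<Rightarrow> real \<Rightarrow> real) (D::real).
    (t0 > 0 \<and> D \<ge> 0
     \<and> (\<forall>j\<in>{-1,0,1}. \<forall>t\<ge>t0. f j t \<ge> 0)
     \<and> (\<forall>j\<in>{-1,0,1}. set_borel_measurable lebesgue {t0..} (f j))
     \<and> (\<forall>j\<in>{0,1}. \<forall>t1 t2. t0 \<le> t1 \<and> t1 \<le> t2 \<longrightarrow>
          ennreal (f j t2) + (\<integral>\<^sup>+ t\<in>{t1..t2}. ennreal (f (j - 1) t) \<partial>lebesgue)
            \<le> ennreal (C * (f j t1 + t1 powr (\<alpha> + real_of_int j) * D))))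
    \<longrightarrow> (\<forall>t\<ge>2 * t0. f 0 t \<le> C' * (t powr (-1) * f 1 (t / 2) + t powr \<alpha> * D))"
proof -
  define M where "M = max (2 powr (-\<alpha>)) 1"
  have M1: "M \<ge> 1" unfolding M_def by simp
  show ?thesis
  proof (rule exI[of _ "C * M + 2 * C^2 + C^2 * 2 powr (-\<alpha>)"], intro allI impI)
    fix t0 :: real and f :: "int \<Rightarrow> real \<Rightarrow> real" and D :: real and t :: real
    assume H: "t0 > 0 \<and> D \<ge> 0
     \<and> (\<forall>j\<in>{-1,0,1}. \<forall>t\<ge>t0. f j t \<ge> 0)
     \<and> (\<forall>j\<in>{-1,0,1}. set_borel_measurable lebesgue {t0..} (f j))
     \<and> (\<forall>j\<in>{0,1}. \<forall>t1 t2. t0 \<le> t1 \<and> t1 \<le> t2 \<longrightarrow>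
          ennreal (f j t2) + (\<integral>\<^sup>+ t\<in>{t1..t2}. ennreal (f (j - 1) t) \<partial>lebesgue)
            \<le> ennreal (C * (f j t1 + t1 powr (\<alpha> + real_of_int j) * D)))"
      and tt: "t \<ge> 2 * t0"
    have t0: "t0 > 0" and D: "D \<ge> 0" using H by auto
    have tpos: "t > 0" using t0 tt by simp
    have nn: "\<And>j s. j \<in> {-1,0,1} \<Longrightarrow> s \<ge> t0 \<Longrightarrow> f j s \<ge> 0" using H by blast
    have H0: "\<And>t1 t2. t0 \<le> t1 \<Longrightarrow> t1 \<le> t2 \<Longrightarrow>
          ennreal (f 0 t2) + (\<integral>\<^sup>+ t\<in>{t1..t2}. ennreal (f (-1) t) \<partial>lebesgue)
            \<le> ennreal (C * (f 0 t1 + t1 powr \<alpha> * D))"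
      using H by force
    have H1: "\<And>t1 t2. t0 \<le> t1 \<Longrightarrow> t1 \<le> t2 \<Longrightarrow>
          ennreal (f 1 t2) + (\<integral>\<^sup>+ t\<in>{t1..t2}. ennreal (f 0 t) \<partial>lebesgue)
            \<le> ennreal (C * (f 1 t1 + t1 powr (\<alpha> + 1) * D))"
      using H by force
    define A where "A = f 0 t"
    define B where "B = f 1 (t/2)"
    define K where "K = M * t powr \<alpha> * D"
    have B0: "B \<ge> 0" unfolding B_def using nn[of 1 "t/2"] tt by simp
    have spow: "s powr \<alpha> \<le> M * t powr \<alpha>" if s: "t/2 \<le> s" "s \<le> t" for s
    proof (cases "\<alpha> \<ge> 0")
      case True
      have "s powr \<alpha> \<le> t powr \<alpha>" using s tpos True by (intro powr_mono2) auto
      also have "\<dots> \<le> M * t powr \<alpha>" using M1 by (simp add: mult_le_cancel_right1)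
      finally show ?thesis .
    next
      case False
      have "s powr \<alpha> \<le> (t/2) powr \<alpha>" 
      proof (rule powr_mono2')
        show "\<alpha> \<le> 0" using False by linarith
        show "0 < t/2" using tpos by linarith
        show "t/2 \<le> s" using s(1) .
      qed
      also have "\<dots> = 2 powr (-\<alpha>) * t powr \<alpha>" using tpos
        by (simp add: powr_divide powr_minus_divide)
      also have "\<dots> \<le> M * t powr \<alpha>" unfolding M_def by (intro mult_right_mono) auto
      finally show ?thesis .
    qed
    have pt: "A \<le> C * f 0 s + C * K" if s: "t/2 \<le> s" "s \<le> t" for s
    proof -
      have s0: "s \<ge> t0" using s tt by simp
      have "ennreal A \<le> ennreal (f 0 t) + (\<integral>\<^sup>+ t\<in>{s..t}. ennreal (f (-1) t) \<partial>lebesgue)"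
        unfolding A_def by simp
      also have "\<dots> \<le> ennreal (C * (f 0 s + s powr \<alpha> * D))"
        using H0[of s t] s s0 by simp
      finally have "ennreal A \<le> ennreal (C * (f 0 s + s powr \<alpha> * D))" .
      moreover have "0 \<le> C * (f 0 s + s powr \<alpha> * D)"
        using assms nn[of 0 s] s0 D by simp
      ultimately have "A \<le> C * (f 0 s + s powr \<alpha> * D)" using ennreal_le_iff by blast
      also have "\<dots> \<le> C * (f 0 s + M * t powr \<alpha> * D)"
        using spow[OF s] assms D by (simp add: mult_right_mono)
      finally show ?thesis unfolding K_def by (simp add: algebra_simps)
    qed
    define a where "a = (A - C * K) / C"
    show "f 0 t \<le> (C * M + 2 * C^2 + C^2 * 2 powr (-\<alpha>)) * (t powr (-1) * f 1 (t / 2) + t powr \<alpha> * D)"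
    proof (cases "a \<ge> 0")
      case False
      then have "A < C * K" unfolding a_def using assms by (simp add: zero_le_divide_iff)
      moreover have "C * K = (C * M) * (t powr \<alpha> * D)" unfolding K_def by (simp add: mult_ac)
      moreover have "0 \<le> (2 * C^2) * (t powr (-1) * B)" using B0 tpos by simp
      moreover have "0 \<le> (C^2 * 2 powr (-\<alpha>)) * (t powr \<alpha> * D)" using D tpos by simp
      ultimately have "A \<le> (C * M) * (t powr \<alpha> * D) + (2 * C^2) * (t powr (-1) * B) + (C^2 * 2 powr (-\<alpha>)) * (t powr \<alpha> * D)"
        by linarith
      then show ?thesis unfolding A_def B_def
        by (rule fin_ineq) (use assms M1 B0 D tpos in \<open>simp_all add: B_def\<close>)
    next
      case True
      have t2: "t0 \<le> t/2" "t/2 \<le> t" using tt tpos by auto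
      have "ennreal a * ennreal (t - t/2) = (\<integral>\<^sup>+ s\<in>{t/2..t}. ennreal a \<partial>lebesgue)"
        using t2 by (simp add: const_int)
      also have "\<dots> \<le> (\<integral>\<^sup>+ s\<in>{t/2..t}. ennreal (f 0 s) \<partial>lebesgue)"
      proof (rule nn_integral_mono)
        fix s
        show "ennreal a * indicator {t/2..t} s \<le> ennreal (f 0 s) * indicator {t/2..t} s"
        proof (cases "s \<in> {t/2..t}")
          case True
          then have "a \<le> f 0 s" using pt[of s] assms unfolding a_def
            by (simp add: divide_le_eq algebra_simps)
          then show ?thesis using True by (simp add: ennreal_leI)
        qed simp
      qed
      also have "\<dots> \<le> ennreal (f 1 t) + (\<integral>\<^sup>+ s\<in>{t/2..t}. ennreal (f 0 s) \<partial>lebesgue)"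
        by simp
      also have "\<dots> \<le> ennreal (C * (B + (t/2) powr (\<alpha> + 1) * D))"
        unfolding B_def using H1[OF t2] by simp
      finally have le1: "ennreal a * ennreal (t - t/2) \<le> ennreal (C * (B + (t/2) powr (\<alpha> + 1) * D))" .
      have "ennreal (a * (t/2)) = ennreal a * ennreal (t - t/2)"
      proof -
        have "t - t/2 = t/2" by simp
        then show ?thesis using True tpos ennreal_mult[of a "t/2"] by simp
      qed
      with le1 have "ennreal (a * (t/2)) \<le> ennreal (C * (B + (t/2) powr (\<alpha> + 1) * D))" by simp
      moreover have "0 \<le> C * (B + (t/2) powr (\<alpha> + 1) * D)" using assms B0 D by simp
      ultimately have ineq: "a * (t/2) \<le> C * (B + (t/2) powr (\<alpha> + 1) * D)"
        using ennreal_le_iff by blast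
      have pw: "(t/2) powr (\<alpha> + 1) = (t/2) * (2 powr (-\<alpha>) * t powr \<alpha>)"
        using tpos by (simp add: powr_add powr_divide powr_minus_divide mult_ac)
      have "A - C * K \<le> C * (2 / t) * (C * (B + (t/2) powr (\<alpha> + 1) * D))"
        using ineq assms tpos unfolding a_def by (simp add: field_simps)
      also have "\<dots> = 2 * C^2 * (t powr (-1) * B) + C^2 * 2 powr (-\<alpha>) * t powr \<alpha> * D"
        unfolding pw using tpos by (simp add: field_simps power2_eq_square powr_minus)
      finally have "A \<le> (C * M) * (t powr \<alpha> * D) + (2 * C^2) * (t powr (-1) * B) + (C^2 * 2 powr (-\<alpha>)) * (t powr \<alpha> * D)"
        unfolding K_def by (simp add: mult_ac)
      then show ?thesis unfolding A_def B_def
        by (rule fin_ineq) (use assms M1 B0 D tpos in \<open>simp_all add: B_def\<close>)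
    qed
  qed
qed

end
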